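(* There exists $M>0$ independent of $n$ and $v$ such that for every $n$ and every $v\in\mathbb R^n$, $$\|v\|_\infty+\|D_nv\|_\infty\le M\big(\|v\|_{2d}+\|P_nv\|_{2d}\big).$$
   Context: Standing assumptions: $\theta,\sigma,\lambda\in PC^1[0,1]$ (piecewise $C^1$: on each interval of some finite partition of $[0,1]$ the function is the restriction of a $C^1[0,1]$ function) with $\inf_{x\in[0,1]}\theta(x)>0$; $\varphi\in C^1([0,1];C^1[0,1])$ is a kernel $\varphi(x,\tilde x)$; $\alpha_0,\beta_0,\alpha_1,\beta_1$ are real constants. Discretization: for $n\ge1$ let $h=1/(n+1)$, $r_0=\alpha_0/(3\alpha_0-2h\beta_0)$, $r_1=\alpha_1/(3\alpha_1+2h\beta_1)$, $q_0=-\beta_0/(\alpha_0-h\beta_0)$ (assumed well defined for all $n$). Define $n\times n$ matrices $\Theta_n=\mathrm{diag}(\theta(h),\dots,\theta(nh))$, $\Sigma_n=\mathrm{diag}(\sigma(h),\dots,\sigma(nh))$, $\Lambda_n=\mathrm{diag}(\lambda(h),\dots,\lambda(nh))$; $L_n=h^{-2}M$ where $M$ is tridiagonal with diagonal entries $-2$ except $M_{11}=4r_0-2$, $M_{nn}=4r_1-2$, superdiagonal entries $1$ except $M_{12}=1-r_0$, subdiagonal entries $1$ except $M_{n,n-1}=1-r_1$; $D_n=h^{-1}N$ where $N_{11}=hq_0$, $N_{1j}=0$ for $j\ge2$, and for $i\ge2$: $N_{ii}=1$, $N_{i,i-1}=-1$, other entries $0$; $\Phi_n$ is lower triangular with $(\Phi_n)_{jm}=h\varphi(jh,mh)$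 for $m\le j$. Set $P_n=\Theta_nL_n+\Sigma_nD_n+\Lambda_n+\Phi_n$. For $v\in\mathbb R^n$, $\|v\|_{2d}=\sqrt h\,\|v\|_2$ and $\|v\|_\infty=\max_j|v_j|$. *)

theory Defs
  imports "HOL-Analysis.Analysis"
begin

definition C1_01 :: "(real \<Rightarrow> real) \<Rightarrow> bool" where
  "C1_01 u \<longleftrightarrow> u C1_differentiable_on {0..1}"

text \<open>Each breakpoint belongs to one of the two adjacent intervals, so the
  value there is the value of one of the two adjacent pieces.\<close>
definition PC1 :: "(real \<Rightarrow> real) \<Rightarrow> bool" where
  "PC1 f \<longleftrightarrow> (\<exists>(xs::real list) (g::nat \<Rightarrow> real \<Rightarrow> real).
      length xs \<ge> 2 \<and> xs ! 0 = 0 \<and> last xs = 1 \<and> sorted_wrt (<) xs \<and>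
      (\<forall>i < length xs - 1. C1_01 (g i) \<and> (\<forall>x \<in> {xs ! i <..< xs ! (i+1)}. f x = g i x)) \<and>
      f 0 = g 0 0 \<and> f 1 = g (length xs - 2) 1 \<and>
      (\<forall>i. 0 < i \<and> i < length xs - 1 \<longrightarrow>
          f (xs ! i) = g (i - 1) (xs ! i) \<or> f (xs ! i) = g i (xs ! i)))"

definition c1norm :: "(real \<Rightarrow> real) \<Rightarrow> real" where
  "c1norm u = (SUP t\<in>{0..1}. \<bar>u t\<bar>) + (SUP t\<in>{0..1}. \<bar>vector_derivative u (at t within {0..1})\<bar>)"

text \<open>phi in C^1([0,1]; C^1[0,1]), where phi x = phi(x, \<cdot>): the map x \<mapsto> phi x is
  (Frechet) differentiable on [0,1] as a C^1[0,1]-valued map, with derivative psi x, and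
  x \<mapsto> psi x is continuous in the C^1[0,1] norm.\<close>
definition C1_C1 :: "(real \<Rightarrow> real \<Rightarrow> real) \<Rightarrow> bool" where
  "C1_C1 phi \<longleftrightarrow> (\<forall>x\<in>{0..1}. C1_01 (phi x)) \<and>
     (\<exists>psi. (\<forall>x\<in>{0..1}. C1_01 (psi x)) \<and>
        (\<forall>x\<in>{0..1}. ((\<lambda>y. c1norm (\<lambda>t. phi y t - phi x t - (y - x) * psi x t) / \<bar>y - x\<bar>)
                         \<longlongrightarrow> 0) (at x within {0..1})) \<and>
        (\<forall>x\<in>{0..1}. ((\<lambda>y. c1norm (\<lambda>t. psi y t - psi x t)) \<longlongrightarrow> 0) (at x within {0..1})))"

text \<open>Vectors in R^n are functions nat \<Rightarrow> real with entries indexed 1..n;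
  n \<times> n matrices are functions nat \<Rightarrow> nat \<Rightarrow> real with indices in 1..n.\<close>

definition hh :: "nat \<Rightarrow> real" where "hh n = 1 / (real n + 1)"

definition r0 :: "real \<Rightarrow> real \<Rightarrow> nat \<Rightarrow> real" where
  "r0 a0 b0 n = a0 / (3 * a0 - 2 * hh n * b0)"
definition r1 :: "real \<Rightarrow> real \<Rightarrow> nat \<Rightarrow> real" where
  "r1 a1 b1 n = a1 / (3 * a1 + 2 * hh n * b1)"
definition q0 :: "real \<Rightarrow> real \<Rightarrow> nat \<Rightarrow> real" where
  "q0 a0 b0 n = - b0 / (a0 - hh n * b0)"

text \<open>The tridiagonal matrix M (for n = 1 the single diagonal entry is taken to be 4 r_0 - 2).\<close>
definition Mmat :: "real \<Rightarrow> real \<Rightarrow> real \<Rightarrow> real \<Rightarrow> nat \<Rightarrow> nat \<Rightarrow> nat \<Rightarrow> real" where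
  "Mmat a0 b0 a1 b1 n i j =
     (if i = j then (if i = 1 then 4 * r0 a0 b0 n - 2 else if i = n then 4 * r1 a1 b1 n - 2 else -2)
      else if j = i + 1 then (if i = 1 then 1 - r0 a0 b0 n else 1)
      else if i = j + 1 then (if i = n then 1 - r1 a1 b1 n else 1)
      else 0)"

definition Lmat :: "real \<Rightarrow> real \<Rightarrow> real \<Rightarrow> real \<Rightarrow> nat \<Rightarrow> nat \<Rightarrow> nat \<Rightarrow> real" where
  "Lmat a0 b0 a1 b1 n i j = Mmat a0 b0 a1 b1 n i j / (hh n)^2"

definition Nmat :: "real \<Rightarrow> real \<Rightarrow> nat \<Rightarrow> nat \<Rightarrow> nat \<Rightarrow> real" where
  "Nmat a0 b0 n i j =
     (if i = 1 then (if j = 1 then hh n * q0 a0 b0 n else 0)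
      else if j = i then 1 else if j + 1 = i then -1 else 0)"

definition Dmat :: "real \<Rightarrow> real \<Rightarrow> nat \<Rightarrow> nat \<Rightarrow> nat \<Rightarrow> real" where
  "Dmat a0 b0 n i j = Nmat a0 b0 n i j / hh n"

definition Phimat :: "(real \<Rightarrow> real \<Rightarrow> real) \<Rightarrow> nat \<Rightarrow> nat \<Rightarrow> nat \<Rightarrow> real" where
  "Phimat phi n j m = (if m \<le> j then hh n * phi (real j * hh n) (real m * hh n) else 0)"

text \<open>P_n = Theta_n L_n + Sigma_n D_n + Lambda_n + Phi_n (diagonal matrices written out).\<close>
definition Pmat :: "(real \<Rightarrow> real) \<Rightarrow> (real \<Rightarrow> real) \<Rightarrow> (real \<Rightarrow> real) \<Rightarrow> (real \<Rightarrow> real \<Rightarrow> real)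
    \<Rightarrow> real \<Rightarrow> real \<Rightarrow> real \<Rightarrow> real \<Rightarrow> nat \<Rightarrow> nat \<Rightarrow> nat \<Rightarrow> real" where
  "Pmat theta sig lam phi a0 b0 a1 b1 n i j =
     theta (real i * hh n) * Lmat a0 b0 a1 b1 n i j
     + sig (real i * hh n) * Dmat a0 b0 n i j
     + (if i = j then lam (real i * hh n) else 0)
     + Phimat phi n i j"

definition mv :: "nat \<Rightarrow> (nat \<Rightarrow> nat \<Rightarrow> real) \<Rightarrow> (nat \<Rightarrow> real) \<Rightarrow> nat \<Rightarrow> real" where
  "mv n A v i = (\<Sum>j = 1..n. A i j * v j)"

definition norm2d :: "nat \<Rightarrow> (nat \<Rightarrow> real) \<Rightarrow> real" where
  "norm2d n v = sqrt (hh n) * sqrt (\<Sum>i = 1..n. (v i)^2)"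

definition norminf :: "nat \<Rightarrow> (nat \<Rightarrow> real) \<Rightarrow> real" where
  "norminf n v = Max ((\<lambda>i. \<bar>v i\<bar>) ` {1..n})"

end

theory Submission
  imports Defs
begin


lemma hh_pos: "hh n > 0" by (simp add: hh_def)
lemma hh_mult: "hh n * (real n + 1) = 1" by (simp add: hh_def)
lemma hh_n_le: "hh n * real n \<le> 1" by (simp add: hh_def field_simps)
lemma hh_n_ge: "n \<ge> 1 \<Longrightarrow> hh n * real n \<ge> 1/2" by (simp add: hh_def field_simps)

lemma norminf_ge: "i \<in> {1..n} \<Longrightarrow> \<bar>v i\<bar> \<le> norminf n v"
  unfolding norminf_def by (rule Max_ge) auto

lemma norminf_le: "n \<ge> 1 \<Longrightarrow> (\<And>i. i \<in> {1..n} \<Longrightarrow> \<bar>v i\<bar> \<le> B) \<Longrightarrow> norminf n v \<le> B"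
  unfolding norminf_def by (subst Max_le_iff) auto

lemma norminf_attained: "n \<ge> 1 \<Longrightarrow> \<exists>j\<in>{1..n}. \<bar>v j\<bar> = norminf n v"
proof -
  assume "n \<ge> 1"
  then have "norminf n v \<in> (\<lambda>i. \<bar>v i\<bar>) ` {1..n}" unfolding norminf_def by (intro Max_in) auto
  then show ?thesis by force
qed

lemma norminf_nonneg: "n \<ge> 1 \<Longrightarrow> norminf n v \<ge> 0"
  using norminf_ge[of 1 n v] by auto

lemma norm2d_nonneg: "norm2d n v \<ge> 0"
  unfolding norm2d_def using hh_pos[of n] by (simp add: sum_nonneg)

lemma norm2d_sq: "(norm2d n v)^2 = hh n * (\<Sum>i=1..n. (v i)^2)"
  unfolding norm2d_def using hh_pos[of n] by (simp add: power_mult_distrib sum_nonneg)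

lemma l1_le: "hh n * (\<Sum>i=1..n. \<bar>v i\<bar>) \<le> norm2d n v"
proof -
  have cs: "(\<Sum>i=1..n. \<bar>v i\<bar>)^2 \<le> (\<Sum>i=1..n. (\<bar>v i\<bar>)^2) * real n"
    using sum_squared_le_sum_of_squares[of "\<lambda>i. \<bar>v i\<bar>" "{1..n}"] by simp
  have h: "hh n > 0" "hh n * real n \<le> 1" using hh_pos hh_n_le by auto
  have "(hh n * (\<Sum>i=1..n. \<bar>v i\<bar>))^2 = hh n * hh n * (\<Sum>i=1..n. \<bar>v i\<bar>)^2"
    by (simp add: power2_eq_square)
  also have "\<dots> \<le> hh n * hh n * ((\<Sum>i=1..n. (v i)^2) * real n)"
    using cs h by (intro mult_left_mono) auto
  also have "\<dots> = hh n * (\<Sum>i=1..n. (v i)^2) * (hh n * real n)" by simp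
  also have "\<dots> \<le> hh n * (\<Sum>i=1..n. (v i)^2)"
    using h by (intro mult_left_le) (simp_all add: sum_nonneg)
  finally have "(hh n * (\<Sum>i=1..n. \<bar>v i\<bar>))^2 \<le> (norm2d n v)^2" by (simp add: norm2d_sq)
  then show ?thesis using norm2d_nonneg[of n v] by (rule power2_le_imp_le)
qed

lemma comp_le: "i \<in> {1..n} \<Longrightarrow> \<bar>v i\<bar> \<le> norm2d n v / sqrt (hh n)"
proof -
  assume i: "i \<in> {1..n}"
  have "(v i)^2 \<le> (\<Sum>i=1..n. (v i)^2)" using i by (intro member_le_sum) auto
  then have "\<bar>v i\<bar> \<le> sqrt (\<Sum>i=1..n. (v i)^2)" by (simp add: real_le_rsqrt)
  then show ?thesis unfolding norm2d_def using hh_pos[of n] by simp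
qed



lemma C1_cont: "C1_01 u \<Longrightarrow> continuous_on {0..1} u"
  unfolding C1_01_def by (simp add: C1_diff_imp_diff differentiable_imp_continuous_on)

lemma C1_bounded: "C1_01 u \<Longrightarrow> \<exists>B\<ge>0. \<forall>x\<in>{0..1}. \<bar>u x\<bar> \<le> B"
proof -
  assume "C1_01 u"
  then have "continuous_on {0..1} u" by (rule C1_cont)
  then obtain B where "B \<ge> 0" "\<And>x. x \<in> {0..1} \<Longrightarrow> norm (u x) \<le> B"
    using continuous_on_compact_bound[of "{0..1::real}" u] by auto
  then show ?thesis by auto
qed

lemma C1_deriv_bounded: "C1_01 u \<Longrightarrow> \<exists>B\<ge>0. \<forall>t\<in>{0..1}. \<bar>vector_derivative u (at t within {0..1})\<bar> \<le> B"
proof -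
  assume "C1_01 u"
  then obtain D where D: "\<And>x. x \<in> {0..1} \<Longrightarrow> (u has_vector_derivative (D x)) (at x)" "continuous_on {0..1} D"
    unfolding C1_01_def C1_differentiable_on_def by blast
  obtain B where "B \<ge> 0" "\<And>x. x \<in> {0..1} \<Longrightarrow> norm (D x) \<le> B"
    using continuous_on_compact_bound[of "{0..1::real}" D] D(2) by auto
  moreover have "\<And>t. t \<in> {0..1} \<Longrightarrow> vector_derivative u (at t within {0..1}) = D t"
    using D(1) by (intro vector_derivative_at_within_ivl) auto
  ultimately show ?thesis by auto
qed

lemma c1norm_ge: "C1_01 u \<Longrightarrow> t \<in> {0..1} \<Longrightarrow> \<bar>u t\<bar> \<le> c1norm u"
proof -
  assume u: "C1_01 u" and t: "t \<in> {0..1}"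
  obtain B where B: "\<forall>x\<in>{0..1}. \<bar>u x\<bar> \<le> B" using C1_bounded[OF u] by auto
  obtain B' where B': "\<forall>x\<in>{0..1}. \<bar>vector_derivative u (at x within {0..1})\<bar> \<le> B'"
    using C1_deriv_bounded[OF u] by auto
  have "\<bar>u t\<bar> \<le> (SUP t\<in>{0..1}. \<bar>u t\<bar>)"
    using B t by (intro cSUP_upper bdd_aboveI2) auto
  moreover have "\<bar>vector_derivative u (at 0 within {0..1})\<bar> \<le> (SUP t\<in>{0..1::real}. \<bar>vector_derivative u (at t within {0..1})\<bar>)"
    using B' by (intro cSUP_upper bdd_aboveI2) auto
  then have "0 \<le> (SUP t\<in>{0..1::real}. \<bar>vector_derivative u (at t within {0..1})\<bar>)"
    by (smt (verit))
  ultimately show ?thesis unfolding c1norm_def by simp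
qed

lemma PC1_bounded: "PC1 f \<Longrightarrow> \<exists>B. \<forall>x\<in>{0..1}. \<bar>f x\<bar> \<le> B"
proof -
  assume "PC1 f"
  then obtain xs :: "real list" and g where
    L2: "length xs \<ge> 2" and x0: "xs ! 0 = 0" and xl: "last xs = 1" and sw: "sorted_wrt (<) xs"
    and gC: "\<forall>i < length xs - 1. C1_01 (g i) \<and> (\<forall>x \<in> {xs ! i <..< xs ! (i+1)}. f x = g i x)"
    and f0: "f 0 = g 0 0" and f1: "f 1 = g (length xs - 2) 1"
    and fb: "\<forall>i. 0 < i \<and> i < length xs - 1 \<longrightarrow> f (xs ! i) = g (i - 1) (xs ! i) \<or> f (xs ! i) = g i (xs ! i)"
    unfolding PC1_def by blast
  define L where "L = length xs"
  have "\<forall>i. \<exists>B. i < L - 1 \<longrightarrow> (\<forall>x\<in>{0..1}. \<bar>g i x\<bar> \<le> B)"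
    using gC C1_bounded unfolding L_def by metis
  then obtain Bg where Bg: "\<And>i x. i < L - 1 \<Longrightarrow> x \<in> {0..1} \<Longrightarrow> \<bar>g i x\<bar> \<le> Bg i" by metis
  have "xs \<noteq> []" using L2 by auto
  then have xlast: "xs ! (L - 1) = 1" using xl unfolding L_def by (simp add: last_conv_nth)
  have ex: "\<exists>i<L-1. f x = g i x" if x: "x \<in> {0..1}" for x
  proof -
    consider "x = 0" | "x = 1" | "\<exists>i. 0 < i \<and> i < L - 1 \<and> x = xs ! i"
      | "x \<noteq> 0" "x \<noteq> 1" "\<not> (\<exists>i. 0 < i \<and> i < L - 1 \<and> x = xs ! i)" by blast
    then show ?thesis
    proof cases
      case 1 then show ?thesis using f0 L2 unfolding L_def by (intro exI[of _ 0]) auto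
    next
      case 2 then show ?thesis using f1 L2 unfolding L_def by (intro exI[of _ "length xs - 2"]) auto
    next
      case 3
      then obtain i where i: "0 < i" "i < L - 1" "x = xs ! i" by blast
      then show ?thesis using fb unfolding L_def by (metis less_imp_diff_less)
    next
      case 4
      with x have x01: "0 < x" "x < 1" by auto
      define I where "I = {i. i < L \<and> xs ! i < x}"
      have fin: "finite I" unfolding I_def by auto
      have "0 \<in> I" unfolding I_def L_def using L2 x0 x01 by auto
      then have I0: "I \<noteq> {}" by auto
      define k where "k = Max I"
      have kI: "k \<in> I" unfolding k_def using fin I0 by (rule Max_in)
      then have k: "k < L" "xs ! k < x" unfolding I_def by auto
      have "k \<noteq> L - 1" using k xlast x01 by auto
      then have kL: "k + 1 < L" using k by auto
      have "k + 1 \<notin> I" using fin kI unfolding k_def by (metis Max_ge Suc_eq_plus1 Suc_n_not_le_n)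
      then have "xs ! (k + 1) \<ge> x" using kL unfolding I_def by auto
      moreover have "xs ! (k + 1) \<noteq> x"
      proof
        assume eq: "xs ! (k + 1) = x"
        show False
        proof (cases "k + 1 = L - 1")
          case True then show False using eq xlast x01 by auto
        next
          case False
          then have "0 < k + 1" "k + 1 < L - 1" using kL by auto
          then have "\<exists>i. 0 < i \<and> i < L - 1 \<and> x = xs ! i" using eq by (intro exI[of _ "k+1"]) simp
          then show False using 4(3) by simp
        qed
      qed
      ultimately have "x \<in> {xs ! k <..< xs ! (k + 1)}" using k(2) by simp
      moreover have "k < length xs - 1" using kL unfolding L_def by simp
      ultimately have "f x = g k x" using gC by blast
      moreover have "k < L - 1" using kL by simp
      ultimately show ?thesis by blast
    qed
  qed
  have "\<bar>f x\<bar> \<le> (\<Sum>i<L-1. \<bar>Bg i\<bar>)" if xx: "x \<in> {0..1}" for x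
  proof -
    obtain i where i: "i < L - 1" "f x = g i x" using ex[OF xx] by blast
    have "\<bar>f x\<bar> \<le> \<bar>Bg i\<bar>" using Bg[OF i(1) xx] i(2) by simp
    also have "\<dots> \<le> (\<Sum>i<L-1. \<bar>Bg i\<bar>)" using i(1) by (intro member_le_sum) auto
    finally show ?thesis .
  qed
  then show ?thesis by blast
qed

lemma phi_bounded:
  assumes "C1_C1 phi"
  shows "\<exists>B. \<forall>x\<in>{0..1}. \<forall>t\<in>{0..1}. \<bar>phi x t\<bar> \<le> B"
proof -
  obtain psi where phiC: "\<forall>x\<in>{0..1}. C1_01 (phi x)" and psiC: "\<forall>x\<in>{0..1}. C1_01 (psi x)"
    and lim: "\<forall>x\<in>{0..1}. ((\<lambda>y. c1norm (\<lambda>t. phi y t - phi x t - (y - x) * psi x t) / \<bar>y - x\<bar>)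
                         \<longlongrightarrow> 0) (at x within {0..1})"
    using assms unfolding C1_C1_def by blast
  have loc: "\<exists>d>0. \<exists>B. \<forall>y\<in>{0..1}. \<bar>y - x\<bar> < d \<longrightarrow> (\<forall>t\<in>{0..1}. \<bar>phi y t\<bar> \<le> B)"
    if x: "x \<in> {0..1}" for x
  proof -
    obtain B1 where B1: "\<forall>t\<in>{0..1}. \<bar>phi x t\<bar> \<le> B1" using C1_bounded phiC x by blast
    obtain B2 where B2: "B2 \<ge> 0" "\<forall>t\<in>{0..1}. \<bar>psi x t\<bar> \<le> B2" using C1_bounded psiC x by blast
    have "eventually (\<lambda>y. c1norm (\<lambda>t. phi y t - phi x t - (y - x) * psi x t) / \<bar>y - x\<bar> < 1) (at x within {0..1})"
      using lim x by (intro order_tendstoD(2)) auto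
    then obtain d where d: "d > 0" "\<forall>y\<in>{0..1}. y \<noteq> x \<and> dist y x < d \<longrightarrow>
        c1norm (\<lambda>t. phi y t - phi x t - (y - x) * psi x t) / \<bar>y - x\<bar> < 1"
      unfolding eventually_at by blast
    have "\<forall>y\<in>{0..1}. \<bar>y - x\<bar> < d \<longrightarrow> (\<forall>t\<in>{0..1}. \<bar>phi y t\<bar> \<le> B1 + B2 + 1)"
    proof (intro ballI impI)
      fix y t :: real assume y: "y \<in> {0..1}" and yd: "\<bar>y - x\<bar> < d" and t: "t \<in> {0..1}"
      show "\<bar>phi y t\<bar> \<le> B1 + B2 + 1"
      proof (cases "y = x")
        case True then show ?thesis using B1 t B2 by force
      next
        case False
        have lt: "c1norm (\<lambda>t. phi y t - phi x t - (y - x) * psi x t) / \<bar>y - x\<bar> < 1"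
          using d y yd False by (auto simp: dist_real_def)
        have yx: "\<bar>y - x\<bar> \<le> 1" "\<bar>y - x\<bar> > 0" using x y False by auto
        have cn: "c1norm (\<lambda>t. phi y t - phi x t - (y - x) * psi x t) < 1"
          using lt yx by (simp add: divide_less_eq) 
        have C1u: "C1_01 (\<lambda>t. phi y t - phi x t - (y - x) * psi x t)"
          using phiC psiC x y unfolding C1_01_def by (intro C1_differentiable_on_diff C1_differentiable_on_mult) auto
        have "\<bar>phi y t - phi x t - (y - x) * psi x t\<bar> < 1"
          using c1norm_ge[OF C1u t] cn by simp
        moreover have "\<bar>(y - x) * psi x t\<bar> \<le> B2"
        proof -
          have "\<bar>(y - x) * psi x t\<bar> = \<bar>y - x\<bar> * \<bar>psi x t\<bar>" by (simp add: abs_mult)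
          also have "\<dots> \<le> 1 * B2" using yx B2 t by (intro mult_mono) auto
          finally show ?thesis by simp
        qed
        moreover have "\<bar>phi x t\<bar> \<le> B1" using B1 t by auto
        ultimately show ?thesis by linarith
      qed
    qed
    then show ?thesis using d by blast
  qed
  then have "\<forall>x\<in>{0..1}. \<exists>dB. fst dB > 0 \<and> (\<forall>y\<in>{0..1}. \<bar>y - x\<bar> < fst dB \<longrightarrow> (\<forall>t\<in>{0..1}. \<bar>phi y t\<bar> \<le> snd dB))"
    by force
  then obtain dB where dB: "\<And>x. x \<in> {0..1} \<Longrightarrow> fst (dB x) > 0 \<and>
      (\<forall>y\<in>{0..1}. \<bar>y - x\<bar> < fst (dB x) \<longrightarrow> (\<forall>t\<in>{0..1}. \<bar>phi y t\<bar> \<le> snd (dB x)))"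
    by metis
  have cover: "{0..1::real} \<subseteq> (\<Union>c\<in>{0..1}. ball c (fst (dB c)))"
  proof
    fix x :: real assume "x \<in> {0..1}"
    then show "x \<in> (\<Union>c\<in>{0..1}. ball c (fst (dB c)))" using dB[of x] by force
  qed
  obtain C' where C': "C' \<subseteq> {0..1}" "finite C'" "{0..1} \<subseteq> (\<Union>c\<in>C'. ball c (fst (dB c)))"
    using compactE_image[OF compact_Icc[of 0 1], of "{0..1}" "\<lambda>c. ball c (fst (dB c))", OF _ cover] by auto
  have "\<forall>y\<in>{0..1}. \<forall>t\<in>{0..1}. \<bar>phi y t\<bar> \<le> (\<Sum>c\<in>C'. \<bar>snd (dB c)\<bar>)"
  proof (intro ballI)
    fix y t :: real assume y: "y \<in> {0..1}" and t: "t \<in> {0..1}"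
    obtain c where c: "c \<in> C'" "y \<in> ball c (fst (dB c))" using C'(3) y by blast
    have "\<bar>y - c\<bar> < fst (dB c)" using c(2) by (auto simp: dist_real_def abs_minus_commute)
    then have "\<bar>phi y t\<bar> \<le> snd (dB c)" using dB[of c] c C'(1) y t by blast
    also have "\<dots> \<le> (\<Sum>c\<in>C'. \<bar>snd (dB c)\<bar>)"
      using c(1) C'(2) by (smt (verit) member_le_sum abs_ge_zero)
    finally show "\<bar>phi y t\<bar> \<le> (\<Sum>c\<in>C'. \<bar>snd (dB c)\<bar>)" .
  qed
  then show ?thesis by blast
qed



lemma sum_sparse:
  fixes f :: "nat \<Rightarrow> real"
  assumes "finite S" "T \<subseteq> S" "\<And>j. j \<in> S \<Longrightarrow> j \<notin> T \<Longrightarrow> f j = 0"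
  shows "sum f S = sum f T"
  using assms by (intro sum.mono_neutral_right) auto

lemma sum3: "a \<noteq> b \<Longrightarrow> a \<noteq> c \<Longrightarrow> b \<noteq> c \<Longrightarrow> (\<Sum>j\<in>{a,b,c}. f j) = f a + f b + (f c :: real)"
  by simp

lemma sum2: "a \<noteq> b \<Longrightarrow> (\<Sum>j\<in>{a,b}. f j) = f a + (f b :: real)"
  by simp

lemma mvD_mid:
  assumes "2 \<le> i" "i \<le> n"
  shows "mv n (Dmat a0 b0 n) v i = (v i - v (i - 1)) / hh n"
proof -
  have "mv n (Dmat a0 b0 n) v i = (\<Sum>j\<in>{i - 1, i}. Dmat a0 b0 n i j * v j)"
    unfolding mv_def using assms by (intro sum_sparse) (auto simp: Dmat_def Nmat_def)
  also have "\<dots> = (v i - v (i - 1)) / hh n"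
    using assms by (simp add: Dmat_def Nmat_def diff_divide_distrib)
  finally show ?thesis .
qed

lemma mvD_1:
  assumes "1 \<le> n"
  shows "mv n (Dmat a0 b0 n) v 1 = q0 a0 b0 n * v 1"
proof -
  have "mv n (Dmat a0 b0 n) v 1 = (\<Sum>j\<in>{1}. Dmat a0 b0 n 1 j * v j)"
    unfolding mv_def using assms by (intro sum_sparse) (auto simp: Dmat_def Nmat_def)
  also have "\<dots> = q0 a0 b0 n * v 1"
    using hh_pos[of n] by (simp add: Dmat_def Nmat_def)
  finally show ?thesis .
qed

lemma mvL_mid:
  assumes "2 \<le> i" "i < n"
  shows "mv n (Lmat a0 b0 a1 b1 n) v i = (v (i + 1) - 2 * v i + v (i - 1)) / (hh n)^2"
proof -
  have "mv n (Lmat a0 b0 a1 b1 n) v i = (\<Sum>j\<in>{i - 1, i, i + 1}. Lmat a0 b0 a1 b1 n i j * v j)"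
    unfolding mv_def using assms by (intro sum_sparse) (auto simp: Lmat_def Mmat_def)
  also have "\<dots> = Lmat a0 b0 a1 b1 n i (i - 1) * v (i - 1) + Lmat a0 b0 a1 b1 n i i * v i
      + Lmat a0 b0 a1 b1 n i (i + 1) * v (i + 1)"
    using assms by (intro sum3) linarith+
  also have "\<dots> = (v (i + 1) - 2 * v i + v (i - 1)) / (hh n)^2"
  proof -
    have "i - 1 \<noteq> i" "i \<noteq> 1" "i \<noteq> n" "i - 1 \<noteq> i + 1" "i = (i - 1) + 1" "i - 1 \<noteq> 1 \<or> True" using assms by auto
    then have "Lmat a0 b0 a1 b1 n i (i - 1) = 1 / (hh n)^2" "Lmat a0 b0 a1 b1 n i i = -2 / (hh n)^2"
      "Lmat a0 b0 a1 b1 n i (i + 1) = 1 / (hh n)^2"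
      unfolding Lmat_def Mmat_def by (auto simp del: One_nat_def)
    then show ?thesis by (simp add: add_divide_distrib diff_divide_distrib algebra_simps)
  qed
  finally show ?thesis .
qed

lemma mvL_1:
  assumes "2 \<le> n"
  shows "mv n (Lmat a0 b0 a1 b1 n) v 1 = ((4 * r0 a0 b0 n - 2) * v 1 + (1 - r0 a0 b0 n) * v 2) / (hh n)^2"
proof -
  have "mv n (Lmat a0 b0 a1 b1 n) v 1 = (\<Sum>j\<in>{1, 2}. Lmat a0 b0 a1 b1 n 1 j * v j)"
    unfolding mv_def using assms by (intro sum_sparse) (auto simp: Lmat_def Mmat_def)
  also have "\<dots> = Lmat a0 b0 a1 b1 n 1 1 * v 1 + Lmat a0 b0 a1 b1 n 1 2 * v 2"
    by (intro sum2) auto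
  also have "\<dots> = ((4 * r0 a0 b0 n - 2) * v 1 + (1 - r0 a0 b0 n) * v 2) / (hh n)^2"
    using assms by (simp add: Lmat_def Mmat_def add_divide_distrib)
  finally show ?thesis .
qed

lemma alg: fixes h a0 b0 x1 x2 :: real
  assumes h0: "h \<noteq> 0" and E': "3 * a0 - 2 * h * b0 \<noteq> 0" and G': "a0 - h * b0 \<noteq> 0"
  shows "((4 * (a0 / (3 * a0 - 2 * h * b0)) - 2) * x1 + (1 - a0 / (3 * a0 - 2 * h * b0)) * x2) / h^2
     = (2 * (a0 - h * b0) / (3 * a0 - 2 * h * b0)) * ((x2 - x1) / h - (- b0 / (a0 - h * b0)) * x1) / h"
proof -
  define E where "E = 3 * a0 - 2 * h * b0"
  define G where "G = a0 - h * b0"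
  have E0: "E \<noteq> 0" and G0: "G \<noteq> 0" using E' G' E_def G_def by auto
  have l: "(4 * (a0 / E) - 2) = (4*a0 - 2*E) / E" "1 - a0 / E = (E - a0) / E" using E0 by (simp_all add: field_simps)
  have r: "(x2 - x1) / h - (- b0 / G) * x1 = ((x2 - x1) * G + h * b0 * x1) / (h * G)"
    using h0 G0 by (simp add: field_simps)
  have "((4*a0 - 2*E) / E * x1 + (E - a0) / E * x2) / h^2 = ((4*a0 - 2*E) * x1 + (E - a0) * x2) / (E * h^2)"
    using E0 h0 by (simp add: add_divide_distrib)
  moreover have "(2 * G / E) * (((x2 - x1) * G + h * b0 * x1) / (h * G)) / h = 2 * ((x2 - x1) * G + h * b0 * x1) / (E * h^2)"
    using E0 h0 G0 by (simp add: power2_eq_square)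
  moreover have "(4*a0 - 2*E) * x1 + (E - a0) * x2 = 2 * ((x2 - x1) * G + h * b0 * x1)"
    unfolding E_def G_def by (simp add: algebra_simps)
  ultimately show ?thesis unfolding l r E_def[symmetric] G_def[symmetric] by simp
qed

lemma row1_identity:
  assumes "2 \<le> n" and E: "3 * a0 - 2 * hh n * b0 \<noteq> 0" and G: "a0 - hh n * b0 \<noteq> 0"
  shows "mv n (Lmat a0 b0 a1 b1 n) v 1 =
     (2 * (a0 - hh n * b0) / (3 * a0 - 2 * hh n * b0)) *
     (mv n (Dmat a0 b0 n) v 2 - mv n (Dmat a0 b0 n) v 1) / hh n"
proof -
  define h where "h = hh n"
  have h0: "h \<noteq> 0" using hh_pos[of n] h_def by auto
  have E': "3 * a0 - 2 * h * b0 \<noteq> 0" and G': "a0 - h * b0 \<noteq> 0" using E G h_def by auto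
  have e1: "mv n (Dmat a0 b0 n) v 2 = (v 2 - v 1) / h" using mvD_mid[of 2 n] assms h_def by simp
  have e2: "mv n (Dmat a0 b0 n) v 1 = (- b0 / (a0 - h * b0)) * v 1" using mvD_1 assms h_def q0_def by simp
  have e3: "mv n (Lmat a0 b0 a1 b1 n) v 1 = ((4 * (a0 / (3 * a0 - 2 * h * b0)) - 2) * v 1
        + (1 - a0 / (3 * a0 - 2 * h * b0)) * v 2) / h^2"
    using mvL_1 assms h_def r0_def by simp
  note alg = alg[OF h0 E' G']
  show ?thesis unfolding h_def[symmetric] e1 e2 e3 alg ..
qed

lemma mvP:
  "mv n (Pmat theta sig lam phi a0 b0 a1 b1 n) v i =
     theta (real i * hh n) * mv n (Lmat a0 b0 a1 b1 n) v i
     + sig (real i * hh n) * mv n (Dmat a0 b0 n) v i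
     + (if i \<in> {1..n} then lam (real i * hh n) * v i else 0)
     + mv n (Phimat phi n) v i"
proof -
  have "mv n (Pmat theta sig lam phi a0 b0 a1 b1 n) v i =
     (\<Sum>j=1..n. theta (real i * hh n) * (Lmat a0 b0 a1 b1 n i j * v j)
       + sig (real i * hh n) * (Dmat a0 b0 n i j * v j)
       + (if i = j then lam (real i * hh n) * v j else 0)
       + Phimat phi n i j * v j)"
    unfolding mv_def Pmat_def by (intro sum.cong) (auto simp: algebra_simps)
  also have "\<dots> = theta (real i * hh n) * mv n (Lmat a0 b0 a1 b1 n) v i
     + sig (real i * hh n) * mv n (Dmat a0 b0 n) v i
     + (\<Sum>j=1..n. (if i = j then lam (real i * hh n) * v j else 0))
     + mv n (Phimat phi n) v i"
    unfolding mv_def by (simp add: sum.distrib sum_distrib_left)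
  also have "(\<Sum>j=1..n. (if i = j then lam (real i * hh n) * v j else 0)) =
     (if i \<in> {1..n} then lam (real i * hh n) * v i else 0)"
    by (simp add: sum.delta)
  finally show ?thesis .
qed

lemma mvPhi_bound:
  assumes Pb: "\<forall>x\<in>{0..1}. \<forall>t\<in>{0..1}. \<bar>phi x t\<bar> \<le> Pb" and i: "i \<in> {1..n}"
  shows "\<bar>mv n (Phimat phi n) v i\<bar> \<le> Pb * norm2d n v"
proof -
  have h: "hh n > 0" "hh n * real n \<le> 1" using hh_pos hh_n_le by auto
  have grid: "real k * hh n \<in> {0..1}" if "k \<in> {1..n}" for k
  proof -
    have "real k * hh n \<le> real n * hh n" using that h by (intro mult_right_mono) auto
    also have "\<dots> \<le> 1" using h by (simp add: mult.commute)
    finally show ?thesis using h by simp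
  qed
  have Pb0: "Pb \<ge> 0" using Pb by (meson abs_ge_zero atLeastAtMost_iff order_trans zero_le_one order_refl)
  have "\<bar>mv n (Phimat phi n) v i\<bar> \<le> (\<Sum>j=1..n. \<bar>Phimat phi n i j * v j\<bar>)"
    unfolding mv_def by (rule sum_abs)
  also have "\<dots> \<le> (\<Sum>j=1..n. hh n * Pb * \<bar>v j\<bar>)"
  proof (rule sum_mono)
    fix j assume j: "j \<in> {1..n}"
    have "\<bar>Phimat phi n i j\<bar> \<le> hh n * Pb"
      using Pb Pb0 grid[OF i] grid[OF j] h unfolding Phimat_def by (auto simp: abs_mult intro: mult_left_mono)
    then show "\<bar>Phimat phi n i j * v j\<bar> \<le> hh n * Pb * \<bar>v j\<bar>"
      by (simp add: abs_mult mult_right_mono)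
  qed
  also have "\<dots> = Pb * (hh n * (\<Sum>j=1..n. \<bar>v j\<bar>))" by (simp add: sum_distrib_left algebra_simps)
  also have "\<dots> \<le> Pb * norm2d n v" using l1_le Pb0 by (intro mult_left_mono) auto
  finally show ?thesis .
qed

lemma fixed_n:
  assumes "n \<ge> 1"
  shows "norminf n v + norminf n (mv n A v)
     \<le> ((1 + (\<Sum>i=1..n. \<Sum>j=1..n. \<bar>A i j\<bar>)) / sqrt (hh n)) * norm2d n v"
proof -
  define X where "X = norm2d n v / sqrt (hh n)"
  define S where "S = (\<Sum>i=1..n. \<Sum>j=1..n. \<bar>A i j\<bar>)"
  have X0: "X \<ge> 0" unfolding X_def using norm2d_nonneg less_imp_le[OF hh_pos]
    by (intro divide_nonneg_nonneg) auto
  have c: "\<And>j. j \<in> {1..n} \<Longrightarrow> \<bar>v j\<bar> \<le> X" using comp_le X_def by auto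
  have "norminf n v \<le> X" using c by (intro norminf_le assms) auto
  moreover have "norminf n (mv n A v) \<le> S * X"
  proof (intro norminf_le assms)
    fix i assume i: "i \<in> {1..n}"
    have "\<bar>mv n A v i\<bar> \<le> (\<Sum>j=1..n. \<bar>A i j * v j\<bar>)" unfolding mv_def by (rule sum_abs)
    also have "\<dots> \<le> (\<Sum>j=1..n. \<bar>A i j\<bar> * X)"
      using c by (intro sum_mono) (simp add: abs_mult mult_left_mono)
    also have "\<dots> = (\<Sum>j=1..n. \<bar>A i j\<bar>) * X" by (simp add: sum_distrib_right)
    also have "\<dots> \<le> S * X" unfolding S_def using i X0
      by (intro mult_right_mono member_le_sum) (auto intro: sum_nonneg)
    finally show "\<bar>mv n A v i\<bar> \<le> S * X" .
  qed
  ultimately have "norminf n v + norminf n (mv n A v) \<le> (1 + S) * X" by (simp add: algebra_simps)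
  then show ?thesis unfolding X_def S_def by simp
qed

lemma c0_ev:
  assumes "\<forall>n\<ge>1. 3 * a0 - 2 * hh n * b0 \<noteq> 0 \<and> 3 * a1 + 2 * hh n * b1 \<noteq> 0 \<and> a0 - hh n * b0 \<noteq> 0"
  shows "\<exists>N. \<forall>n\<ge>N. 2 * (a0 - hh n * b0) / (3 * a0 - 2 * hh n * b0) \<ge> 1/2"
proof (cases "a0 = 0")
  case a0z: True
  then have "b0 \<noteq> 0" using assms hh_pos[of 1] by auto
  have "2 * (a0 - hh n * b0) / (3 * a0 - 2 * hh n * b0) \<ge> 1/2" for n
  proof -
    have "hh n \<noteq> 0" using hh_pos[of n] by simp
    then have "hh n * b0 \<noteq> 0" using \<open>b0 \<noteq> 0\<close> by simp
    moreover have "2 * (a0 - hh n * b0) = 3 * a0 - 2 * hh n * b0" using a0z by simp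
    ultimately have "2 * (a0 - hh n * b0) / (3 * a0 - 2 * hh n * b0) = 1" using a0z by simp
    then show ?thesis by linarith
  qed
  then show ?thesis by blast
next
  case a0nz: False
  have hl: "(\<lambda>n. hh n) \<longlonglongrightarrow> 0"
  proof -
    have "(\<lambda>n. inverse (real (Suc n))) \<longlonglongrightarrow> 0" by (rule LIMSEQ_inverse_real_of_nat)
    moreover have "(\<lambda>n. hh n) = (\<lambda>n. inverse (real (Suc n)))" by (auto simp: hh_def field_simps)
    ultimately show ?thesis by simp
  qed
  have "(\<lambda>n. 2 * (a0 - hh n * b0) / (3 * a0 - 2 * hh n * b0)) \<longlonglongrightarrow> 2 * (a0 - 0 * b0) / (3 * a0 - 2 * 0 * b0)"
    using a0nz by (intro tendsto_intros hl) auto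
  moreover have "2 * (a0 - 0 * b0) / (3 * a0 - 2 * 0 * b0) = 2/3" using a0nz by simp
  ultimately have "(\<lambda>n. 2 * (a0 - hh n * b0) / (3 * a0 - 2 * hh n * b0)) \<longlonglongrightarrow> 2/3" using a0nz by simp
  then have "eventually (\<lambda>n. 2 * (a0 - hh n * b0) / (3 * a0 - 2 * hh n * b0) > 1/2) sequentially"
    by (rule order_tendstoD) simp
  then show ?thesis unfolding eventually_sequentially by (meson less_imp_le)
qed



lemma tele_abs:
  fixes f b :: "nat \<Rightarrow> real"
  assumes "i \<le> j" "\<And>k. i \<le> k \<Longrightarrow> k < j \<Longrightarrow> \<bar>f (Suc k) - f k\<bar> \<le> b k"
  shows "\<bar>f j - f i\<bar> \<le> (\<Sum>k=i..<j. b k)"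
  using assms
proof (induction j rule: dec_induct)
  case base then show ?case by simp
next
  case (step j)
  have "\<bar>f (Suc j) - f i\<bar> \<le> \<bar>f (Suc j) - f j\<bar> + \<bar>f j - f i\<bar>" by simp
  also have "\<dots> \<le> b j + (\<Sum>k=i..<j. b k)" using step by (intro add_mono) auto
  finally show ?case using step by simp
qed

lemma tele_lower:
  fixes f b :: "nat \<Rightarrow> real"
  assumes "i \<le> j" "\<And>k. i \<le> k \<Longrightarrow> k < j \<Longrightarrow> b k \<le> s * (f (Suc k) - f k)"
  shows "(\<Sum>k=i..<j. b k) \<le> s * (f j - f i)"
  using assms
proof (induction j rule: dec_induct)
  case base then show ?case by simp
next
  case (step j)
  have "(\<Sum>k=i..<Suc j. b k) = (\<Sum>k=i..<j. b k) + b j" using step by simp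
  also have "\<dots> \<le> s * (f j - f i) + s * (f (Suc j) - f j)" using step by (intro add_mono) auto
  also have "\<dots> = s * (f (Suc j) - f i)" by (simp add: algebra_simps)
  finally show ?case .
qed

definition Cc :: "real \<Rightarrow> real" where "Cc K = sqrt (3456 * (4 * (K + 1))^3)"

lemma Cc_nonneg: "K \<ge> 0 \<Longrightarrow> Cc K \<ge> 0"
  unfolding Cc_def by (intro real_sqrt_ge_zero mult_nonneg_nonneg zero_le_power) auto

lemma core:
  fixes v d e :: "nat \<Rightarrow> real" and n :: nat and K F :: real
  assumes K: "K \<ge> 0"
  and nbig: "real n + 1 \<ge> 8 * (K + 1)"
  and step: "\<And>i. 1 \<le> i \<Longrightarrow> i < n \<Longrightarrow> \<bar>d (Suc i) - d i\<bar> \<le> hh n * K * norminf n d + hh n * e i"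
  and epos: "\<And>i. e i \<ge> 0"
  and esum: "hh n * (\<Sum>i=1..n. e i) \<le> F"
  and dv: "\<And>i. 2 \<le> i \<Longrightarrow> i \<le> n \<Longrightarrow> d i = (v i - v (i - 1)) / hh n"
  shows "norminf n v + norminf n d \<le> 8 * F + (2 * Cc K + 2) * norm2d n v"
proof -
  define h where "h = hh n"
  define D where "D = norminf n d"
  define V where "V = norm2d n v"
  have hpos: "h > 0" using hh_pos h_def by auto
  have hn: "h * (real n + 1) = 1" using hh_mult h_def by auto
  have hdef: "h = 1 / (real n + 1)" using h_def hh_def by simp
  have n1: "n \<ge> 1" using nbig K by (cases n) auto
  have D0: "D \<ge> 0" using norminf_nonneg[OF n1] D_def by auto
  have V0: "V \<ge> 0" using norm2d_nonneg V_def by auto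
  have F0: "F \<ge> 0" using esum epos hpos h_def by (smt (verit) mult_nonneg_nonneg sum_nonneg)
  have dD: "\<And>i. i \<in> {1..n} \<Longrightarrow> \<bar>d i\<bar> \<le> D" using norminf_ge D_def by auto
  have d_diff: "\<bar>d j - d i\<bar> \<le> real (j - i) * (h * K * D) + F" if "1 \<le> i" "i \<le> j" "j \<le> n" for i j
  proof -
    have "\<bar>d j - d i\<bar> \<le> (\<Sum>k=i..<j. h * K * D + h * e k)"
      using that by (intro tele_abs) (auto simp: step h_def D_def)
    also have "\<dots> = real (j - i) * (h * K * D) + h * (\<Sum>k=i..<j. e k)"
      by (simp add: sum.distrib sum_distrib_left)
    also have "h * (\<Sum>k=i..<j. e k) \<le> h * (\<Sum>k=1..n. e k)"
      using that hpos epos by (intro mult_left_mono sum_mono2) auto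
    finally show ?thesis using esum h_def by simp
  qed
  have d_diff2: "\<bar>d i - d j\<bar> \<le> real m * (h * K * D) + F"
    if "i \<in> {1..n}" "j \<in> {1..n}" "i \<le> j + m" "j \<le> i + m" for i j m
  proof (cases "i \<le> j")
    case True
    then have "\<bar>d i - d j\<bar> \<le> real (j - i) * (h * K * D) + F" using d_diff[of i j] that by auto
    also have "real (j - i) * (h * K * D) \<le> real m * (h * K * D)"
      using that hpos K D0 by (intro mult_right_mono) auto
    finally show ?thesis by simp
  next
    case False
    then have "\<bar>d i - d j\<bar> \<le> real (i - j) * (h * K * D) + F" using d_diff[of j i] that by auto
    also have "real (i - j) * (h * K * D) \<le> real m * (h * K * D)"
      using that hpos K D0 by (intro mult_right_mono) auto
    finally show ?thesis by simp
  qed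
  have vstep: "\<bar>v (Suc k) - v k\<bar> \<le> h * D" if "1 \<le> k" "k < n" for k
  proof -
    have "v (Suc k) - v k = h * d (Suc k)" using dv[of "Suc k"] that hpos h_def by auto
    then show ?thesis using dD[of "Suc k"] that hpos by (simp add: abs_mult)
  qed
  have v_diff: "\<bar>v i - v j\<bar> \<le> D" if "i \<in> {1..n}" "j \<in> {1..n}" for i j
  proof -
    have gen: "\<bar>v q - v p\<bar> \<le> D" if "1 \<le> p" "p \<le> q" "q \<le> n" for p q
    proof -
      have "\<bar>v q - v p\<bar> \<le> (\<Sum>k=p..<q. h * D)" using that by (intro tele_abs vstep) auto
      also have "\<dots> = real (q - p) * (h * D)" by simp
      also have "\<dots> \<le> (real n + 1) * (h * D)" using that hpos D0 by (intro mult_right_mono) auto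
      also have "\<dots> = (h * (real n + 1)) * D" by (simp add: algebra_simps)
      also have "\<dots> = D" using hn by simp
      finally show ?thesis .
    qed
    show ?thesis using gen[of i j] gen[of j i] that by (cases "i \<le> j") (auto simp: abs_minus_commute)
  qed
  have vmax: "norminf n v \<le> 2 * V + D"
  proof (rule norminf_le[OF n1])
    fix i assume i: "i \<in> {1..n}"
    have "(\<Sum>j=1..n. \<bar>v i\<bar>) \<le> (\<Sum>j=1..n. \<bar>v j\<bar> + D)"
      using v_diff[OF i] by (intro sum_mono) (smt (verit, best))
    then have "real n * \<bar>v i\<bar> \<le> (\<Sum>j=1..n. \<bar>v j\<bar>) + real n * D" by (simp add: sum.distrib)
    then have "h * (real n * \<bar>v i\<bar>) \<le> h * ((\<Sum>j=1..n. \<bar>v j\<bar>) + real n * D)"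
      using hpos by (intro mult_left_mono) auto
    then have "h * real n * \<bar>v i\<bar> \<le> h * (\<Sum>j=1..n. \<bar>v j\<bar>) + h * real n * D"
      by (simp add: algebra_simps)
    also have "h * (\<Sum>j=1..n. \<bar>v j\<bar>) \<le> V" using l1_le h_def V_def by auto
    finally have A: "h * real n * \<bar>v i\<bar> \<le> V + h * real n * D" by simp
    have hn2: "h * real n \<ge> 1/2" using hh_n_ge[OF n1] h_def by auto
    have "h * real n * \<bar>v i\<bar> \<le> h * real n * (2 * V + D)"
    proof -
      have "(1/2) * (2 * V) \<le> h * real n * (2 * V)" using hn2 V0 by (intro mult_right_mono) auto
      then have "V \<le> h * real n * (2 * V)" by simp
      then show ?thesis using A by (simp add: algebra_simps)
    qed
    moreover have "h * real n > 0" using hn2 by linarith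
    ultimately show "\<bar>v i\<bar> \<le> 2 * V + D" by (simp add: mult_le_cancel_left_pos)
  qed
  define eta where "eta = 1 / (4 * (K + 1))"
  have eta0: "eta > 0" using K eta_def by auto
  have etaK: "eta * K \<le> 1/4" using K unfolding eta_def by (simp add: field_simps)
  have eta_le: "eta \<le> 1/4" using K unfolding eta_def by (simp add: field_simps)
  have etah: "eta / h \<ge> 2"
  proof -
    have "eta / h = (real n + 1) / (4 * (K + 1))" unfolding eta_def hdef by simp
    moreover have "2 \<le> (real n + 1) / (4 * (K + 1))" using nbig K by (simp add: le_divide_eq)
    ultimately show ?thesis by simp
  qed
  define m where "m = nat \<lfloor>eta / h\<rfloor>"
  have m_le: "real m \<le> eta / h" unfolding m_def using etah by linarith
  have m_ge: "real m \<ge> eta / h - 1" unfolding m_def using etah by linarith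
  have mh_le: "real m * h \<le> eta" using m_le hpos by (simp add: field_simps)
  have mh_ge: "real m * h \<ge> eta / 2"
  proof -
    have "real m \<ge> eta / (2 * h)" using m_ge etah hpos by (simp add: field_simps)
    then show ?thesis using hpos by (simp add: field_simps)
  qed
  have n_m: "2 * m + 1 < n"
  proof -
    have "real m * h \<le> 1/4" using mh_le eta_le by simp
    then have "real m \<le> (real n + 1) / 4" unfolding hdef by (simp add: field_simps)
    moreover have "real n \<ge> 7" using nbig K by simp
    ultimately have "2 * real m + 1 < real n" by simp
    then show ?thesis by linarith
  qed
  have Dbound: "D \<le> 4 * F + Cc K * V"
  proof (cases "D \<le> 4 * F")
    case True
    have "Cc K * V \<ge> 0" using V0 Cc_nonneg[OF K] by simp
    then show ?thesis using True by simp
  next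
    case False
    obtain j0 where j0: "j0 \<in> {1..n}" "\<bar>d j0\<bar> = D" using norminf_attained[OF n1, of d] unfolding D_def by blast
    define s where "s = (if d j0 \<ge> 0 then 1 else -1::real)"
    have sd: "s * d j0 = D" using j0 s_def by auto
    have s2: "\<bar>s\<bar> = 1" using s_def by auto
    have near: "s * d i > D / 2" if "i \<in> {1..n}" "i \<le> j0 + m" "j0 \<le> i + m" for i
    proof -
      have "\<bar>d i - d j0\<bar> \<le> real m * (h * K * D) + F" using d_diff2 that j0 by auto
      also have "real m * (h * K * D) = (real m * h) * K * D" by simp
      also have "\<dots> \<le> eta * K * D" using mh_le K D0 by (intro mult_right_mono) auto
      also have "\<dots> \<le> (1/4) * D" using etaK D0 by (intro mult_right_mono) auto
      also have "\<dots> = D / 4" by simp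
      finally have "\<bar>d i - d j0\<bar> < D / 2" using False by simp
      moreover have "s * d i = s * d j0 + s * (d i - d j0)" by (simp add: algebra_simps)
      moreover have "\<bar>s * (d i - d j0)\<bar> = \<bar>d i - d j0\<bar>" using s2 by (simp add: abs_mult)
      ultimately show ?thesis using sd by linarith
    qed
    obtain a where a: "1 \<le> a" "a + m \<le> n" "a \<le> j0" "j0 \<le> a + m"
    proof (cases "j0 + m \<le> n")
      case True then show ?thesis using that[of j0] j0 by auto
    next
      case False then show ?thesis using that[of "j0 - m"] j0 n_m by auto
    qed
    have vinc: "h * (D / 2) \<le> s * (v (Suc k) - v k)" if "a \<le> k" "k < a + m" for k
    proof -
      have "v (Suc k) - v k = h * d (Suc k)" using dv[of "Suc k"] that a hpos h_def by auto
      then have eq: "s * (v (Suc k) - v k) = h * (s * d (Suc k))" by simp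
      have "s * d (Suc k) > D / 2" using near[of "Suc k"] that a by auto
      then have "h * (D / 2) \<le> h * (s * d (Suc k))" using hpos by (intro mult_left_mono) auto
      then show ?thesis using eq by linarith
    qed
    define p where "p = m div 3"
    define t where "t = real m * h * D / 12"
    have "D > 0" using False F0 by linarith
    moreover have "real m * h > 0" using mh_ge eta0 by linarith
    ultimately have t0: "t > 0" unfolding t_def by simp
    have pair: "\<bar>v l\<bar> + \<bar>v k\<bar> \<ge> 2 * t" if "k \<in> {a..a+p}" "l \<in> {a+m-p..a+m}" for k l
    proof -
      have kl: "k \<le> l" "3 * (l - k) \<ge> m" using that unfolding p_def by auto
      have "(\<Sum>q=k..<l. h * (D / 2)) \<le> s * (v l - v k)"
        using kl that by (intro tele_lower vinc) auto
      then have "real (l - k) * (h * (D / 2)) \<le> s * (v l - v k)" by simp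
      moreover have "real m * (h * (D / 2)) \<le> (3 * real (l - k)) * (h * (D / 2))"
      proof (rule mult_right_mono)
        show "real m \<le> 3 * real (l - k)" using kl(2) by linarith
        show "0 \<le> h * (D / 2)" using hpos D0 by simp
      qed
      moreover have "\<bar>s * (v l - v k)\<bar> \<le> \<bar>v l\<bar> + \<bar>v k\<bar>" using s2 by (simp add: abs_mult)
      ultimately show ?thesis unfolding t_def by (simp add: field_simps)
    qed
    obtain S where S: "S \<subseteq> {1..n}" "card S = p + 1" "\<And>k. k \<in> S \<Longrightarrow> \<bar>v k\<bar> \<ge> t"
    proof (cases "\<forall>k\<in>{a..a+p}. \<bar>v k\<bar> \<ge> t")
      case True
      show ?thesis using that[of "{a..a+p}"] True a unfolding p_def by auto
    next
      case False2: False
      then obtain k where k: "k \<in> {a..a+p}" "\<bar>v k\<bar> < t" by auto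
      have "\<forall>l\<in>{a+m-p..a+m}. \<bar>v l\<bar> \<ge> t" using pair[OF k(1)] k(2) by force
      moreover have "card {a+m-p..a+m} = p + 1" unfolding p_def by auto
      moreover have "p \<le> m" unfolding p_def by simp
      ultimately show ?thesis using that[of "{a+m-p..a+m}"] a by auto
    qed
    have "real (p + 1) * t^2 = (\<Sum>k\<in>S. t^2)" using S by simp
    also have "\<dots> \<le> (\<Sum>k\<in>S. (v k)^2)"
      using S t0 by (intro sum_mono) (metis abs_le_square_iff abs_of_pos)
    also have "\<dots> \<le> (\<Sum>k=1..n. (v k)^2)" using S by (intro sum_mono2) auto
    finally have sq: "real (p + 1) * t^2 \<le> (\<Sum>k=1..n. (v k)^2)" .
    have "m \<le> 3 * (p + 1)" unfolding p_def by presburger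
    then have p3: "real m \<le> 3 * real (p + 1)" by linarith
    have "V^2 = h * (\<Sum>k=1..n. (v k)^2)" using norm2d_sq V_def h_def by auto
    also have "\<dots> \<ge> h * (real (p + 1) * t^2)" using sq hpos by (intro mult_left_mono) auto
    finally have V2: "h * (real (p + 1) * t^2) \<le> V^2" .
    have "(real m * h)^3 * D^2 / 432 = h * ((real m / 3) * t^2)"
      unfolding t_def by (simp add: field_simps power2_eq_square power3_eq_cube)
    also have "\<dots> \<le> h * (real (p + 1) * t^2)"
      using p3 hpos by (intro mult_left_mono mult_right_mono) auto
    finally have A: "(real m * h)^3 * D^2 / 432 \<le> V^2" using V2 by simp
    have "(eta / 2)^3 \<le> (real m * h)^3" using mh_ge eta0 by (intro power_mono) auto
    then have "(eta / 2)^3 * D^2 / 432 \<le> (real m * h)^3 * D^2 / 432"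
      by (intro divide_right_mono mult_right_mono) auto
    with A have B: "(eta / 2)^3 * D^2 / 432 \<le> V^2" by simp
    have "D^2 \<le> (Cc K * V)^2"
    proof -
      have e3: "eta^3 = 1 / (4 * (K + 1))^3" unfolding eta_def by (simp add: power_divide)
      have "(Cc K * V)^2 = 3456 * (4 * (K + 1))^3 * V^2" unfolding Cc_def using K
        by (simp add: power_mult_distrib)
      moreover have "D^2 \<le> 3456 * (4 * (K + 1))^3 * V^2"
      proof -
        define q where "q = 4 * (K + 1)"
        have q0: "q > 0" using K q_def by simp
        have "(eta / 2)^3 * D^2 / 432 = D^2 / (3456 * q^3)"
          unfolding eta_def q_def[symmetric] by (simp add: power_divide)
        with B have "D^2 / (3456 * q^3) \<le> V^2" by simp
        then have "D^2 \<le> V^2 * (3456 * q^3)" using q0 by (simp add: pos_divide_le_eq)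
        then show ?thesis unfolding q_def by (simp add: algebra_simps)
      qed
      ultimately show ?thesis by simp
    qed
    moreover have "0 \<le> Cc K * V" using V0 Cc_nonneg[OF K] by simp
    ultimately have "D \<le> Cc K * V" by (rule power2_le_imp_le)
    then show ?thesis using F0 by simp
  qed
  show ?thesis using vmax Dbound unfolding D_def V_def by (simp add: algebra_simps)
qed



lemma big_case:
  fixes theta sig lam :: "real \<Rightarrow> real" and phi :: "real \<Rightarrow> real \<Rightarrow> real"
  assumes Th: "Th > 0" and thl: "\<forall>x\<in>{0..1}. theta x \<ge> Th"
    and Sb: "\<forall>x\<in>{0..1}. \<bar>sig x\<bar> \<le> Sb" and Lb: "\<forall>x\<in>{0..1}. \<bar>lam x\<bar> \<le> Lb"
    and Pb: "\<forall>x\<in>{0..1}. \<forall>t\<in>{0..1}. \<bar>phi x t\<bar> \<le> Pb"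
    and Sb0: "Sb \<ge> 0" and Lb0: "Lb \<ge> 0" and Pb0: "Pb \<ge> 0"
    and nK: "real n + 1 \<ge> 8 * (2 * Sb / Th + 1)"
    and c0: "2 * (a0 - hh n * b0) / (3 * a0 - 2 * hh n * b0) \<ge> 1/2"
    and E: "3 * a0 - 2 * hh n * b0 \<noteq> 0" and G: "a0 - hh n * b0 \<noteq> 0"
  shows "norminf n v + norminf n (mv n (Dmat a0 b0 n) v)
     \<le> (16 / Th * (1 + Lb + Pb) + 2 * Cc (2 * Sb / Th) + 2)
        * (norm2d n v + norm2d n (mv n (Pmat theta sig lam phi a0 b0 a1 b1 n) v))"
proof -
  define K where "K = 2 * Sb / Th"
  define h where "h = hh n"
  define d where "d = mv n (Dmat a0 b0 n) v"
  define w where "w = mv n (Pmat theta sig lam phi a0 b0 a1 b1 n) v"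
  define D where "D = norminf n d"
  define V where "V = norm2d n v"
  define W where "W = norm2d n w"
  define e where "e i = (2 / Th) * (\<bar>w i\<bar> + Lb * \<bar>v i\<bar> + Pb * V)" for i
  define F where "F = (2 / Th) * (W + Lb * V + Pb * V)"
  have K0: "K \<ge> 0" unfolding K_def using Sb0 Th by simp
  have n7: "n \<ge> 7" using nK K0 unfolding K_def[symmetric] by simp
  have n1: "n \<ge> 1" using n7 by simp
  have hpos: "h > 0" using hh_pos h_def by simp
  have hn: "h * real n \<le> 1" using hh_n_le h_def by simp
  have V0: "V \<ge> 0" and W0: "W \<ge> 0" using norm2d_nonneg V_def W_def by auto
  have D0: "D \<ge> 0" using norminf_nonneg[OF n1] D_def by simp
  have grid: "real k * h \<in> {0..1}" if "k \<in> {1..n}" for k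
  proof -
    have "real k * h \<le> real n * h" using that hpos by (intro mult_right_mono) auto
    also have "\<dots> \<le> 1" using hn by (simp add: mult.commute)
    finally show ?thesis using hpos by simp
  qed
  have step: "\<bar>d (Suc i) - d i\<bar> \<le> h * K * D + h * e i" if i: "1 \<le> i" "i < n" for i
  proof -
    define c where "c = (if i = 1 then 2 * (a0 - hh n * b0) / (3 * a0 - 2 * hh n * b0) else 1)"
    have c2: "c \<ge> 1/2" using c0 unfolding c_def by auto
    have Lrow: "mv n (Lmat a0 b0 a1 b1 n) v i = c * (d (Suc i) - d i) / h"
    proof (cases "i = 1")
      case True
      then show ?thesis using row1_identity[of n a0 b0 a1 b1 v] n7 E G
        unfolding c_def d_def h_def by (simp add: numeral_2_eq_2)
    next
      case False
      then have i2: "2 \<le> i" using i by simp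
      have e1: "d (Suc i) = (v (i + 1) - v i) / h" using mvD_mid[of "Suc i" n a0 b0 v] i i2
        unfolding d_def h_def by simp
      have e2: "d i = (v i - v (i - 1)) / h" using mvD_mid[of i n a0 b0 v] i i2
        unfolding d_def h_def by simp
      have e3: "mv n (Lmat a0 b0 a1 b1 n) v i = (v (i + 1) - 2 * v i + v (i - 1)) / h^2"
        using mvL_mid[of i n a0 b0 a1 b1 v] i2 i unfolding h_def by simp
      have alg: "(x - 2 * y + z) / h^2 = ((x - y) / h - (y - z) / h) / h" for x y z :: real
        using hpos by (simp add: field_simps power2_eq_square)
      have "c = 1" using False unfolding c_def by simp
      then show ?thesis unfolding e1 e2 e3 alg by simp
    qed
    have iI: "i \<in> {1..n}" using i by simp
    define th where "th = theta (real i * h)"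
    have th: "th \<ge> Th" using thl grid[OF iI] th_def by auto
    have Pi: "w i = th * (c * (d (Suc i) - d i) / h) + sig (real i * h) * d i + lam (real i * h) * v i
        + mv n (Phimat phi n) v i"
      using mvP[of n theta sig lam phi a0 b0 a1 b1 v i] iI Lrow
      unfolding w_def d_def th_def h_def by simp
    define R where "R = \<bar>w i\<bar> + Sb * D + Lb * \<bar>v i\<bar> + Pb * V"
    have "\<bar>sig (real i * h) * d i\<bar> \<le> Sb * D"
      unfolding abs_mult using Sb grid[OF iI] norminf_ge[OF iI, of d] D_def Sb0
      by (intro mult_mono) auto
    moreover have "\<bar>lam (real i * h) * v i\<bar> \<le> Lb * \<bar>v i\<bar>"
      unfolding abs_mult using Lb grid[OF iI] by (intro mult_right_mono) auto
    moreover have "\<bar>mv n (Phimat phi n) v i\<bar> \<le> Pb * V"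
      using mvPhi_bound[OF Pb iI] V_def by simp
    moreover have "th * (c * (d (Suc i) - d i) / h) = w i - sig (real i * h) * d i - lam (real i * h) * v i
        - mv n (Phimat phi n) v i" using Pi by simp
    moreover have "\<bar>(x::real) - y - z - u\<bar> \<le> \<bar>x\<bar> + \<bar>y\<bar> + \<bar>z\<bar> + \<bar>u\<bar>" for x y z u
      by linarith
    ultimately have "\<bar>th * (c * (d (Suc i) - d i) / h)\<bar> \<le> R"
      unfolding R_def by (smt (verit))
    moreover have "\<bar>th * (c * (d (Suc i) - d i) / h)\<bar> = th * c * \<bar>d (Suc i) - d i\<bar> / h"
      using th Th c2 hpos by (simp add: abs_mult)
    ultimately have A: "th * c * \<bar>d (Suc i) - d i\<bar> \<le> h * R" using hpos by (simp add: divide_le_eq mult.commute)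
    have "Th / 2 * \<bar>d (Suc i) - d i\<bar> \<le> th * c * \<bar>d (Suc i) - d i\<bar>"
    proof (rule mult_right_mono)
      have "Th * (1/2) \<le> th * c" using th c2 Th by (intro mult_mono) auto
      then show "Th / 2 \<le> th * c" by simp
    qed simp
    with A have "Th / 2 * \<bar>d (Suc i) - d i\<bar> \<le> h * R" by linarith
    then have "\<bar>d (Suc i) - d i\<bar> \<le> 2 * h * R / Th" using Th by (simp add: field_simps)
    also have "2 * h * R / Th = h * K * D + h * e i"
      unfolding R_def K_def e_def using Th by (simp add: field_simps)
    finally show ?thesis .
  qed
  have epos: "e i \<ge> 0" for i unfolding e_def using Th Lb0 Pb0 V0 by simp
  have esum: "h * (\<Sum>i=1..n. e i) \<le> F"
  proof -
    have "h * (\<Sum>i=1..n. e i) = (2 / Th) * (h * (\<Sum>i=1..n. \<bar>w i\<bar>) + Lb * (h * (\<Sum>i=1..n. \<bar>v i\<bar>)) + Pb * V * (h * real n))"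
      unfolding e_def by (simp add: sum.distrib sum_distrib_left algebra_simps)
    also have "\<dots> \<le> (2 / Th) * (W + Lb * V + Pb * V)"
    proof -
      have "h * (\<Sum>i=1..n. \<bar>w i\<bar>) \<le> W" using l1_le h_def W_def by simp
      moreover have "Lb * (h * (\<Sum>i=1..n. \<bar>v i\<bar>)) \<le> Lb * V" using l1_le h_def V_def Lb0
        by (intro mult_left_mono) auto
      moreover have "Pb * V * (h * real n) \<le> Pb * V" using hn Pb0 V0
        by (intro mult_left_le) auto
      ultimately show ?thesis using Th by (intro mult_left_mono) auto
    qed
    finally show ?thesis unfolding F_def .
  qed
  have dv: "d i = (v i - v (i - 1)) / h" if "2 \<le> i" "i \<le> n" for i
    using mvD_mid[OF that] d_def h_def by simp
  have core_res: "norminf n v + norminf n d \<le> 8 * F + (2 * Cc K + 2) * V"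
    using core[where v=v and d=d and e=e and n=n and K=K and F=F] K0 nK step epos esum dv
    unfolding K_def[symmetric] h_def[symmetric] D_def[symmetric] V_def by simp
  have CK: "Cc K \<ge> 0" using Cc_nonneg[OF K0] .
  have "8 * F + (2 * Cc K + 2) * V \<le> (16 / Th * (1 + Lb + Pb) + 2 * Cc K + 2) * (V + W)"
  proof -
    have "8 * F = 16 / Th * W + 16 / Th * (Lb + Pb) * V" unfolding F_def by (simp add: algebra_simps add_divide_distrib)
    moreover have "16 / Th * W \<le> 16 / Th * (1 + Lb + Pb) * W"
      using Th Lb0 Pb0 W0 by (intro mult_right_mono) (auto simp: field_simps)
    moreover have "16 / Th * (Lb + Pb) * V \<le> 16 / Th * (1 + Lb + Pb) * V"
      using Th Lb0 Pb0 V0 by (intro mult_right_mono mult_left_mono) auto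
    moreover have "16 / Th * (1 + Lb + Pb) * V + 16 / Th * (1 + Lb + Pb) * W + (2 * Cc K + 2) * V
        \<le> (16 / Th * (1 + Lb + Pb) + 2 * Cc K + 2) * (V + W)"
    proof -
      have gen: "0 \<le> B * W' \<Longrightarrow> A * V' + A * W' + B * V' \<le> (A + B) * (V' + W')" for A B V' W' :: real
        by (simp add: algebra_simps)
      have "0 \<le> (2 * Cc K + 2) * W" using CK W0 by simp
      from gen[OF this, of "16 / Th * (1 + Lb + Pb)" V] show ?thesis by (simp add: add.assoc)
    qed
    ultimately show ?thesis by linarith
  qed
  then show ?thesis using core_res unfolding K_def V_def W_def d_def w_def by simp
qed



theorem lemma3:
  fixes theta sig lam :: "real \<Rightarrow> real" and phi :: "real \<Rightarrow> real \<Rightarrow> real"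
    and a0 b0 a1 b1 :: real
  assumes "PC1 theta" and "PC1 sig" and "PC1 lam"
    and "(INF x\<in>{0..1}. theta x) > 0"
    and "C1_C1 phi"
    and "\<forall>n\<ge>1. 3 * a0 - 2 * hh n * b0 \<noteq> 0 \<and> 3 * a1 + 2 * hh n * b1 \<noteq> 0 \<and> a0 - hh n * b0 \<noteq> 0"
  shows "\<exists>M>0. \<forall>n\<ge>1. \<forall>v :: nat \<Rightarrow> real.
           norminf n v + norminf n (mv n (Dmat a0 b0 n) v)
             \<le> M * (norm2d n v + norm2d n (mv n (Pmat theta sig lam phi a0 b0 a1 b1 n) v))"
proof -
  define Th where "Th = (INF x\<in>{0..1}. theta x)"
  have Th: "Th > 0" using assms(4) Th_def by simp
  obtain Bt where Bt: "\<forall>x\<in>{0..1}. \<bar>theta x\<bar> \<le> Bt" using PC1_bounded[OF assms(1)] by blast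
  have bdd: "bdd_below (theta ` {0..1})"
  proof (rule bdd_belowI2[of _ "- Bt"])
    fix x :: real assume "x \<in> {0..1}"
    then have "\<bar>theta x\<bar> \<le> Bt" using Bt by blast
    then show "- Bt \<le> theta x" by linarith
  qed
  have thl: "\<forall>x\<in>{0..1}. theta x \<ge> Th" unfolding Th_def using bdd by (auto intro: cINF_lower)
  obtain Sb' where Sb': "\<forall>x\<in>{0..1}. \<bar>sig x\<bar> \<le> Sb'" using PC1_bounded[OF assms(2)] by blast
  obtain Lb' where Lb': "\<forall>x\<in>{0..1}. \<bar>lam x\<bar> \<le> Lb'" using PC1_bounded[OF assms(3)] by blast
  obtain Pb' where Pb': "\<forall>x\<in>{0..1}. \<forall>t\<in>{0..1}. \<bar>phi x t\<bar> \<le> Pb'" using phi_bounded[OF assms(5)] by blast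
  define Sb where "Sb = max Sb' 0"
  define Lb where "Lb = max Lb' 0"
  define Pb where "Pb = max Pb' 0"
  have Sb: "\<forall>x\<in>{0..1}. \<bar>sig x\<bar> \<le> Sb" using Sb' Sb_def by force
  have Lb: "\<forall>x\<in>{0..1}. \<bar>lam x\<bar> \<le> Lb" using Lb' Lb_def by force
  have Pb: "\<forall>x\<in>{0..1}. \<forall>t\<in>{0..1}. \<bar>phi x t\<bar> \<le> Pb" using Pb' Pb_def by force
  have Sb0: "Sb \<ge> 0" and Lb0: "Lb \<ge> 0" and Pb0: "Pb \<ge> 0" using Sb_def Lb_def Pb_def by auto
  define K where "K = 2 * Sb / Th"
  obtain N1 where N1: "\<forall>n\<ge>N1. 2 * (a0 - hh n * b0) / (3 * a0 - 2 * hh n * b0) \<ge> 1/2"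
    using c0_ev[OF assms(6)] by blast
  define N0 where "N0 = max (max N1 1) (nat \<lceil>8 * (K + 1)\<rceil>)"
  define M1 where "M1 = 16 / Th * (1 + Lb + Pb) + 2 * Cc K + 2"
  define Cn where "Cn k = (1 + (\<Sum>i=1..k. \<Sum>j=1..k. \<bar>Dmat a0 b0 k i j\<bar>)) / sqrt (hh k)" for k
  define M where "M = M1 + (\<Sum>k=1..N0. Cn k) + 1"
  have K0: "K \<ge> 0" unfolding K_def using Sb0 Th by simp
  have M10: "M1 \<ge> 0" unfolding M1_def using Th Lb0 Pb0 Cc_nonneg[OF K0] by simp
  have Cn0: "Cn k \<ge> 0" for k
    unfolding Cn_def using hh_pos[of k] by (intro divide_nonneg_nonneg add_nonneg_nonneg sum_nonneg) auto
  have SC0: "(\<Sum>k=1..N0. Cn k) \<ge> 0" using Cn0 by (simp add: sum_nonneg)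
  have Mpos: "M > 0" unfolding M_def using M10 SC0 by simp
  have "\<forall>n\<ge>1. \<forall>v :: nat \<Rightarrow> real.
           norminf n v + norminf n (mv n (Dmat a0 b0 n) v)
             \<le> M * (norm2d n v + norm2d n (mv n (Pmat theta sig lam phi a0 b0 a1 b1 n) v))"
  proof (intro allI impI)
    fix n :: nat and v :: "nat \<Rightarrow> real"
    assume n1: "n \<ge> 1"
    define V where "V = norm2d n v"
    define W where "W = norm2d n (mv n (Pmat theta sig lam phi a0 b0 a1 b1 n) v)"
    have V0: "V \<ge> 0" and W0: "W \<ge> 0" using norm2d_nonneg V_def W_def by auto
    show "norminf n v + norminf n (mv n (Dmat a0 b0 n) v) \<le> M * (V + W)"
      unfolding V_def[symmetric] W_def[symmetric]
    proof (cases "n \<ge> N0")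
      case True
      have nK: "real n + 1 \<ge> 8 * (2 * Sb / Th + 1)"
      proof -
        have "real n \<ge> real (nat \<lceil>8 * (K + 1)\<rceil>)" using True unfolding N0_def by simp
        moreover have "real (nat \<lceil>8 * (K + 1)\<rceil>) \<ge> 8 * (K + 1)" by linarith
        ultimately show ?thesis unfolding K_def by simp
      qed
      have c0: "2 * (a0 - hh n * b0) / (3 * a0 - 2 * hh n * b0) \<ge> 1/2" using N1 True unfolding N0_def by simp
      have E: "3 * a0 - 2 * hh n * b0 \<noteq> 0" and G: "a0 - hh n * b0 \<noteq> 0" using assms(6) n1 by auto
      have "norminf n v + norminf n (mv n (Dmat a0 b0 n) v) \<le> M1 * (V + W)"
        using big_case[OF Th thl Sb Lb Pb Sb0 Lb0 Pb0 nK c0 E G, of v a1 b1]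
        unfolding M1_def K_def V_def W_def by simp
      also have "\<dots> \<le> M * (V + W)" unfolding M_def using SC0 V0 W0 by (intro mult_right_mono) auto
      finally show ?thesis .
    next
      case False
      have "norminf n v + norminf n (mv n (Dmat a0 b0 n) v) \<le> Cn n * V"
        using fixed_n[OF n1, of v "Dmat a0 b0 n"] unfolding Cn_def V_def by simp
      also have "\<dots> \<le> Cn n * (V + W)" using Cn0 W0 by (intro mult_left_mono) auto
      also have "\<dots> \<le> M * (V + W)"
      proof (intro mult_right_mono)
        have "Cn n \<le> (\<Sum>k=1..N0. Cn k)" using n1 False Cn0 by (intro member_le_sum) auto
        then show "Cn n \<le> M" unfolding M_def using M10 by simp
      qed (use V0 W0 in simp)
      finally show ?thesis .
    qed
  qed
  then show ?thesis using Mpos by blast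
qed


end
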